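(* Let $\Gamma=(V,\nu,\mu)$ be a fuzzy graph on $n$ vertices with fuzzy complement $\overline{\Gamma}$. For $v\in V$ put $d_{\max}(v)=\sum_{u\ne v}\min(\nu(v),\nu(u))$, $\lambda_{\max}=\frac1n\sum_{v\in V}d_{\max}(v)$, $e(v)=d_{\max}(v)-\lambda_{\max}$, and $E=\frac1n\sum_{v\in V}e(v)^2$. Then $$2\,\sigma^*(\Gamma)+E-2\sqrt{\sigma^*(\Gamma)\,E}\;\le\;\sigma^*(\Gamma)+\sigma^*(\overline{\Gamma})\;\le\;2\,\sigma^*(\Gamma)+E+2\sqrt{\sigma^*(\Gamma)\,E}.$$
   Context: A fuzzy graph $\Gamma=(V,\nu,\mu)$ consists of a finite vertex set $V$ with $|V|=n\ge1$, a map $\nu:V\to[0,1]$, and a symmetric map $\mu:V\times V\to[0,1]$ with $\mu(u,v)\le\min(\nu(u),\nu(v))$. The fuzzy degree is $d_\Gamma(v)=\sum_{u\ne v}\mu(v,u)$, the fuzzy size is $\mathrm{ew}(\Gamma)=\frac12\sum_v d_\Gamma(v)$, $\lambda=2\,\mathrm{ew}(\Gamma)/n$, and the fuzzy sigma index is $\sigma^*(\Gamma)=\frac1n\sum_{v}(d_\Gamma(v)-\lambda)^2$. The fuzzy complement $\overline{\Gamma}=(V,\nu,\overline{\mu})$ has $\overline{\mu}(u,v)=\min(\nu(u),\nu(v))-\mu(u,v)$ for $u\ne v$. *)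

theory Defs
  imports Complex_Main
begin

definition fuzzy_graph :: "'a set \<Rightarrow> ('a \<Rightarrow> real) \<Rightarrow> ('a \<Rightarrow> 'a \<Rightarrow> real) \<Rightarrow> bool" where
  "fuzzy_graph V \<nu> \<mu> \<longleftrightarrow> finite V \<and> V \<noteq> {} \<and>
     (\<forall>v\<in>V. 0 \<le> \<nu> v \<and> \<nu> v \<le> 1) \<and>
     (\<forall>u\<in>V. \<forall>v\<in>V. 0 \<le> \<mu> u v \<and> \<mu> u v \<le> 1 \<and> \<mu> u v = \<mu> v u \<and> \<mu> u v \<le> min (\<nu> u) (\<nu> v))"

definition fdeg :: "'a set \<Rightarrow> ('a \<Rightarrow> 'a \<Rightarrow> real) \<Rightarrow> 'a \<Rightarrow> real" where
  "fdeg V \<mu> v = (\<Sum>u\<in>V - {v}. \<mu> v u)"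

definition fsize :: "'a set \<Rightarrow> ('a \<Rightarrow> 'a \<Rightarrow> real) \<Rightarrow> real" where
  "fsize V \<mu> = (\<Sum>v\<in>V. fdeg V \<mu> v) / 2"

definition flambda :: "'a set \<Rightarrow> ('a \<Rightarrow> 'a \<Rightarrow> real) \<Rightarrow> real" where
  "flambda V \<mu> = 2 * fsize V \<mu> / real (card V)"

definition fsigma :: "'a set \<Rightarrow> ('a \<Rightarrow> 'a \<Rightarrow> real) \<Rightarrow> real" where
  "fsigma V \<mu> = (\<Sum>v\<in>V. (fdeg V \<mu> v - flambda V \<mu>)^2) / real (card V)"

text \<open>Fuzzy complement edge function (only values with u \<noteq> v matter).\<close>
definition fcompl :: "('a \<Rightarrow> real) \<Rightarrow> ('a \<Rightarrow> 'a \<Rightarrow> real) \<Rightarrow> 'a \<Rightarrow> 'a \<Rightarrow> real" where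
  "fcompl \<nu> \<mu> u v = (if u = v then 0 else min (\<nu> u) (\<nu> v) - \<mu> u v)"

end

theory Submission
  imports Defs "HOL-Analysis.L2_Norm"
begin

lemma cs_abs:
  fixes a b :: "'a \<Rightarrow> real"
  shows "\<bar>\<Sum>v\<in>V. a v * b v\<bar> \<le> sqrt ((\<Sum>v\<in>V. (a v)^2) * (\<Sum>v\<in>V. (b v)^2))"
proof -
  have "\<bar>\<Sum>v\<in>V. a v * b v\<bar> \<le> (\<Sum>v\<in>V. \<bar>a v\<bar> * \<bar>b v\<bar>)"
    by (metis (no_types, lifting) abs_mult sum.cong sum_abs)
  also have "\<dots> \<le> L2_set a V * L2_set b V" by (rule L2_set_mult_ineq)
  also have "\<dots> = sqrt ((\<Sum>v\<in>V. (a v)^2) * (\<Sum>v\<in>V. (b v)^2))"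
    by (simp add: L2_set_def real_sqrt_mult)
  finally show ?thesis .
qed

theorem corollary2p13:
  fixes V :: "'a set" and \<nu> :: "'a \<Rightarrow> real" and \<mu> :: "'a \<Rightarrow> 'a \<Rightarrow> real"
  assumes "fuzzy_graph V \<nu> \<mu>"
  defines "dmax \<equiv> \<lambda>v. (\<Sum>u\<in>V - {v}. min (\<nu> v) (\<nu> u))"
  defines "lmax \<equiv> (\<Sum>v\<in>V. dmax v) / real (card V)"
  defines "e \<equiv> \<lambda>v. dmax v - lmax"
  defines "E \<equiv> (\<Sum>v\<in>V. (e v)^2) / real (card V)"
  shows "2 * fsigma V \<mu> + E - 2 * sqrt (fsigma V \<mu> * E)
           \<le> fsigma V \<mu> + fsigma V (fcompl \<nu> \<mu>)
         \<and> fsigma V \<mu> + fsigma V (fcompl \<nu> \<mu>)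
           \<le> 2 * fsigma V \<mu> + E + 2 * sqrt (fsigma V \<mu> * E)"
proof -
  have fin: "finite V" and ne: "V \<noteq> {}" using assms(1) by (auto simp: fuzzy_graph_def)
  define n where "n = real (card V)"
  have npos: "n > 0" using fin ne by (simp add: n_def card_gt_0_iff)
  define a where "a = (\<lambda>v. fdeg V \<mu> v - flambda V \<mu>)"
  have degc: "fdeg V (fcompl \<nu> \<mu>) v = dmax v - fdeg V \<mu> v" if "v \<in> V" for v
  proof -
    have "fdeg V (fcompl \<nu> \<mu>) v = (\<Sum>u\<in>V - {v}. min (\<nu> v) (\<nu> u) - \<mu> v u)"
      unfolding fdeg_def by (rule sum.cong) (auto simp: fcompl_def)
    thus ?thesis by (simp add: dmax_def fdeg_def sum_subtractf)
  qed
  have lam: "flambda V f = (\<Sum>v\<in>V. fdeg V f v) / n" for f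
    by (simp add: flambda_def fsize_def n_def)
  have lamc: "flambda V (fcompl \<nu> \<mu>) = lmax - flambda V \<mu>"
  proof -
    have "(\<Sum>v\<in>V. fdeg V (fcompl \<nu> \<mu>) v) = (\<Sum>v\<in>V. dmax v) - (\<Sum>v\<in>V. fdeg V \<mu> v)"
      using degc by (simp add: sum_subtractf)
    thus ?thesis using npos by (simp add: lam lmax_def n_def[symmetric] diff_divide_distrib)
  qed
  define S where "S = (\<Sum>v\<in>V. (a v)^2)"
  define T where "T = (\<Sum>v\<in>V. (e v)^2)"
  define P where "P = (\<Sum>v\<in>V. a v * e v)"
  have sig: "fsigma V \<mu> = S / n" by (simp add: fsigma_def S_def a_def n_def)
  have Ed: "E = T / n" by (simp add: E_def T_def n_def)
  have "fsigma V (fcompl \<nu> \<mu>) = (\<Sum>v\<in>V. (e v - a v)^2) / n"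
    unfolding fsigma_def n_def
    by (rule arg_cong[where f="\<lambda>x. x / _"], rule sum.cong)
       (auto simp: degc lamc e_def a_def algebra_simps)
  also have "(\<Sum>v\<in>V. (e v - a v)^2) = T + S - 2 * P"
    by (simp add: T_def S_def P_def power2_diff sum.distrib sum_subtractf sum_distrib_left
        algebra_simps)
  finally have sc: "fsigma V (fcompl \<nu> \<mu>) = (T + S - 2 * P) / n" .
  have cs: "\<bar>P\<bar> \<le> sqrt (S * T)" unfolding P_def S_def T_def by (rule cs_abs)
  have sq: "sqrt (fsigma V \<mu> * E) = sqrt (S * T) / n"
    using npos by (simp add: sig Ed real_sqrt_divide real_sqrt_mult power2_eq_square[symmetric])
  have "(2*S + T - 2 * sqrt (S*T)) / n \<le> (S + (T + S - 2*P)) / n"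
    and "(S + (T + S - 2*P)) / n \<le> (2*S + T + 2 * sqrt (S*T)) / n"
    using cs npos by (auto intro!: divide_right_mono)
  thus ?thesis
    unfolding sq unfolding sc sig Ed by (simp add: add_divide_distrib diff_divide_distrib)
qed

end
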